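(* Let $f,g:\mathbb R\to\mathbb R$ be two convex functions. Define $\psi:\mathbb R\to(-\infty,\infty]$ by $\psi=g-(g-f)^c$. Then $\psi$ is convex.
   Context: For $h:\mathbb R\to(-\infty,\infty)$, $h^c$ denotes the largest convex function lying below $h$ (the convex hull). It may be identically $-\infty$; a function identically equal to $-\infty$ or $+\infty$ is deemed convex. *)

theory Defs
  imports "HOL-Analysis.Analysis" "HOL-Library.Extended_Real"
begin

text \<open>Convexity of an extended-real valued function on the real line, via convexity
  of its epigraph (the standard convention; the constants +infinity and -infinity are
  convex).\<close>
definition econvex :: "(real \<Rightarrow> ereal) \<Rightarrow> bool" where
  "econvex \<phi> \<longleftrightarrow> convex {(x, t::real). \<phi> x \<le> ereal t}"

text \<open>The convex hull h^c of h: the largest convex function lying below h, i.e. the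
  pointwise supremum of all convex minorants of h (possibly identically -infinity).\<close>
definition convex_minorant :: "(real \<Rightarrow> real) \<Rightarrow> real \<Rightarrow> ereal" where
  "convex_minorant h = (\<lambda>x. SUP \<phi> \<in> {\<phi>. econvex \<phi> \<and> (\<forall>y. \<phi> y \<le> ereal (h y))}. \<phi> x)"

end

theory Submission
  imports Defs
begin

definition tp :: "(real \<Rightarrow> real) \<Rightarrow> bool" where
  "tp F \<longleftrightarrow> (\<forall>y z w. y < z \<and> z < w \<longrightarrow> F z * (w - y) \<le> F y * (w - z) + F w * (z - y))"

lemma convex_tp: "convex_on UNIV F \<Longrightarrow> tp F"
proof (unfold tp_def, intro allI impI)
  fix y z w :: real assume c: "convex_on UNIV F" and yz: "y < z \<and> z < w"
  define t where "t = (z - y) / (w - y)"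
  have t: "0 \<le> t" "t \<le> 1" using yz by (auto simp: t_def field_simps)
  have tt: "t * (w - y) = z - y" using yz by (simp add: t_def)
  have z: "z = (1 - t) *\<^sub>R y + t *\<^sub>R w" using tt by (simp add: algebra_simps)
  have "F z \<le> (1 - t) * F y + t * F w" using convex_onD[OF c t] z by simp
  hence "F z * (w - y) \<le> ((1 - t) * F y + t * F w) * (w - y)" using yz by (simp add: mult_right_mono)
  also have "\<dots> = F y * (w - y) + (F w - F y) * (t * (w - y))" by (simp add: algebra_simps)
  also have "\<dots> = F y * (w - z) + F w * (z - y)" unfolding tt by (simp add: algebra_simps)
  finally show "F z * (w - y) \<le> F y * (w - z) + F w * (z - y)" .
qed

lemma tp_convex: "tp F \<Longrightarrow> convex_on UNIV F"
proof (rule convex_on_linorderI)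
  fix t x y :: real assume tp: "tp F" and t: "0 < t" "t < 1" and xy: "x < y"
  define z where "z = (1 - t) *\<^sub>R x + t *\<^sub>R y"
  have e1: "z - x = t * (y - x)" "y - z = (1 - t) * (y - x)" by (simp_all add: z_def algebra_simps)
  have zz: "x < z" "z < y" using e1 t xy by (smt (verit) mult_pos_pos)+
  have "F z * (y - x) \<le> F x * (y - z) + F y * (z - x)" using tp zz by (auto simp: tp_def)
  also have "\<dots> = ((1 - t) * F x + t * F y) * (y - x)" by (simp add: z_def algebra_simps)
  finally show "F ((1 - t) *\<^sub>R x + t *\<^sub>R y) \<le> (1 - t) * F x + t * F y"
    using xy by (simp add: z_def)
qed auto


lemma glue:
  assumes k: "tp k" and c: "tp c" and ab: "a \<le> b" and ca: "c a \<le> k a" and cb: "c b \<le> k b"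
    and Pdef: "\<And>t. P t = (if a \<le> t \<and> t \<le> b then max (k t) (c t) else k t)"
  shows "tp P"
  unfolding tp_def
proof (intro allI impI)
  fix y z w :: real assume yzw: "y < z \<and> z < w"
  have kP: "k t \<le> P t" for t unfolding Pdef by auto
  have cP: "a \<le> t \<Longrightarrow> t \<le> b \<Longrightarrow> c t \<le> P t" for t unfolding Pdef by auto
  define s where "s = (P w - P y) / (w - y)"
  define l where "l t = P y + s * (t - y)" for t
  have lw: "l t * (w - y) = P y * (w - t) + P w * (t - y)" for t
    using yzw by (simp add: l_def s_def field_simps)
  have toL: "X * (w - y) \<le> P y * (w - t) + P w * (t - y) \<Longrightarrow> X \<le> l t" for X t
  proof -
    assume "X * (w - y) \<le> P y * (w - t) + P w * (t - y)"
    hence "X * (w - y) \<le> l t * (w - y)" using lw[of t] by simp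
    then show "X \<le> l t" using yzw by (simp add: mult_le_cancel_right_pos)
  qed
  have kl: "y < t \<Longrightarrow> t < w \<Longrightarrow> k t \<le> l t" for t
  proof (rule toL)
    assume "y < t" "t < w"
    hence "k t * (w - y) \<le> k y * (w - t) + k w * (t - y)" using k by (auto simp: tp_def)
    also have "\<dots> \<le> P y * (w - t) + P w * (t - y)"
      using \<open>y < t\<close> \<open>t < w\<close> by (intro add_mono mult_right_mono kP) auto
    finally show "k t * (w - y) \<le> P y * (w - t) + P w * (t - y)" .
  qed
  have "P z \<le> l z"
  proof (cases "P z = k z")
    case True then show ?thesis using kl[of z] yzw by simp
  next
    case False
    hence zab: "a \<le> z" "z \<le> b" and Pz: "P z = c z" unfolding Pdef by (auto split: if_splits simp: max_def)
    define p where "p = max a y"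
    define q where "q = min b w"
    have ly: "l y = P y" and lw': "l w = P w" using yzw by (auto simp: l_def s_def)
    have cp: "c p \<le> l p"
    proof (cases "a \<le> y")
      case True then show ?thesis using cP[of y] yzw zab ly by (auto simp: p_def)
    next
      case False then show ?thesis using kl[of a] ca yzw zab by (auto simp: p_def)
    qed
    have cq: "c q \<le> l q"
    proof (cases "w \<le> b")
      case True then show ?thesis using cP[of w] yzw zab lw' by (auto simp: q_def)
    next
      case False then show ?thesis using kl[of b] cb yzw zab by (auto simp: q_def)
    qed
    have pz: "p \<le> z" "z \<le> q" using yzw zab by (auto simp: p_def q_def)
    have "c z \<le> l z"
    proof (cases "z = p \<or> z = q")
      case True then show ?thesis using cp cq by auto
    next
      case False
      hence pq: "p < z" "z < q" using pz by auto
      have "c z * (q - p) \<le> c p * (q - z) + c q * (z - p)" using c pq by (auto simp: tp_def)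
      also have "\<dots> \<le> l p * (q - z) + l q * (z - p)"
        using pq cp cq by (intro add_mono mult_right_mono) auto
      also have "\<dots> = l z * (q - p)" by (simp add: l_def algebra_simps)
      finally show ?thesis using pq by (simp add: mult_le_cancel_right_pos)
    qed
    then show ?thesis using Pz by simp
  qed
  hence "P z * (w - y) \<le> l z * (w - y)" using yzw by (intro mult_right_mono) auto
  then show "P z * (w - y) \<le> P y * (w - z) + P w * (z - y)" using lw by simp
qed


lemma cm_econvex: "econvex (convex_minorant h)"
proof -
  let ?S = "{\<phi>. econvex \<phi> \<and> (\<forall>y. \<phi> y \<le> ereal (h y))}"
  have "{(x, t::real). convex_minorant h x \<le> ereal t} = (\<Inter>\<phi>\<in>?S. {(x, t::real). \<phi> x \<le> ereal t})"
    by (auto simp: convex_minorant_def SUP_le_iff)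
  moreover have "convex (\<Inter>\<phi>\<in>?S. {(x, t::real). \<phi> x \<le> ereal t})"
    by (rule convex_INT) (auto simp: econvex_def)
  ultimately show ?thesis by (simp add: econvex_def)
qed

lemma cm_le: "convex_minorant h x \<le> ereal (h x)"
  by (auto simp: convex_minorant_def SUP_le_iff)

lemma cm_max:
  assumes "convex_on UNIV \<phi>" "\<And>y. \<phi> y \<le> h y"
  shows "ereal (\<phi> x) \<le> convex_minorant h x"
proof -
  have "{(x, t::real). ereal (\<phi> x) \<le> ereal t} = epigraph UNIV \<phi>" by (auto simp: epigraph_def)
  hence "econvex (\<lambda>x. ereal (\<phi> x))" using assms(1) by (simp add: econvex_def convex_epigraph)
  then show ?thesis unfolding convex_minorant_def using assms(2)
    by (intro SUP_upper2[where i="\<lambda>x. ereal (\<phi> x)"]) auto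
qed

lemma minf_all:
  assumes E: "econvex H" and le: "\<And>x. H x \<le> ereal (h x)" and x0: "H x0 = -\<infinity>"
  shows "H x = -\<infinity>"
proof (rule ereal_bot)
  fix B
  define z where "z = 2 * x - x0"
  let ?E = "{(x, t::real). H x \<le> ereal t}"
  have "(x0, 2 * B - h z) \<in> ?E" using x0 by simp
  moreover have "(z, h z) \<in> ?E" using le[of z] by simp
  ultimately have "(1/2) *\<^sub>R (x0, 2 * B - h z) + (1/2) *\<^sub>R (z, h z) \<in> ?E"
    using E unfolding econvex_def by (intro convexD) auto
  moreover have "(1/2) *\<^sub>R (x0, 2 * B - h z) + (1/2) *\<^sub>R (z, h z) = (x, B)"
    by (simp add: z_def algebra_simps)
  ultimately show "H x \<le> ereal B" by simp
qed

theorem lemma2p2: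
  fixes f g :: "real \<Rightarrow> real"
  assumes "convex_on UNIV f" and "convex_on UNIV g"
  shows "econvex (\<lambda>x. ereal (g x) - convex_minorant (\<lambda>y. g y - f y) x)"
proof -
  define h where "h y = g y - f y" for y
  define H where "H = convex_minorant h"
  have hh: "(\<lambda>y. g y - f y) = h" by (simp add: h_def fun_eq_iff)
  have EH: "econvex H" unfolding H_def by (rule cm_econvex)
  have Hle: "H x \<le> ereal (h x)" for x unfolding H_def by (rule cm_le)
  show ?thesis
  proof (cases "\<exists>x0. H x0 = -\<infinity>")
    case True
    then obtain x0 where "H x0 = -\<infinity>" by blast
    hence "H x = -\<infinity>" for x using minf_all[OF EH Hle] by blast
    hence "{(x, t::real). ereal (g x) - H x \<le> ereal t} = {}" by simp
    then show ?thesis unfolding hh H_def[symmetric] econvex_def by simp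
  next
    case False
    define k where "k x = real_of_ereal (H x)" for x
    have Hk: "H x = ereal (k x)" for x
      using False Hle[of x] unfolding k_def by (cases "H x") auto
    have kh: "k x \<le> h x" for x using Hle[of x] by (simp add: Hk)
    have kmax: "convex_on UNIV \<phi> \<Longrightarrow> (\<And>y. \<phi> y \<le> h y) \<Longrightarrow> \<phi> x \<le> k x" for \<phi> x
      using cm_max[of \<phi> h x] by (simp add: H_def[symmetric] Hk)
    have "{(x, t::real). H x \<le> ereal t} = epigraph UNIV k" by (auto simp: epigraph_def Hk)
    hence kc: "convex_on UNIV k" using EH by (simp add: econvex_def convex_epigraph)
    define psi where "psi x = g x - k x" for x
    have fpsi: "f x \<le> psi x" for x using kh[of x] by (simp add: psi_def h_def)
    have "tp psi"
    proof (unfold tp_def, intro allI impI, rule ccontr)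
      fix y z w :: real assume yzw: "y < z \<and> z < w"
        and bad: "\<not> psi z * (w - y) \<le> psi y * (w - z) + psi w * (z - y)"
      define L where "L t = (psi y * (w - t) + psi w * (t - y)) / (w - y)" for t
      define c where "c t = g t - L t" for t
      have Lmul: "L t * (w - y) = psi y * (w - t) + psi w * (t - y)" for t
        using yzw by (simp add: L_def)
      have Lz: "L z < psi z" using bad Lmul[of z] yzw
        by (metis mult_le_cancel_right_pos diff_gt_0_iff_gt not_le order_less_le_trans order.strict_trans)
      have Ly: "L y = psi y" and Lw: "L w = psi w" using yzw by (auto simp: L_def field_simps)
      have ctp: "tp c" unfolding tp_def
      proof (intro allI impI)
        fix p q r :: real assume pqr: "p < q \<and> q < r"
        have "g q * (r - p) \<le> g p * (r - q) + g r * (q - p)"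
          using convex_tp[OF assms(2)] pqr by (auto simp: tp_def)
        moreover have "L q * (r - p) = L p * (r - q) + L r * (q - p)"
        proof -
          define sl where "sl = (psi w - psi y) / (w - y)"
          have La: "L t = psi y + sl * (t - y)" for t
            using yzw by (simp add: L_def sl_def field_simps)
          show ?thesis unfolding La by (simp add: algebra_simps)
        qed
        ultimately show "c q * (r - p) \<le> c p * (r - q) + c r * (q - p)"
          by (simp add: c_def algebra_simps)
      qed
      define P where "P t = (if y \<le> t \<and> t \<le> w then max (k t) (c t) else k t)" for t
      have cy: "c y = k y" and cw: "c w = k w" by (simp_all add: c_def Ly Lw psi_def)
      have "tp P" by (rule glue[OF convex_tp[OF kc] ctp]) (use yzw cy cw in \<open>auto simp: P_def\<close>)
      hence Pc: "convex_on UNIV P" by (rule tp_convex)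
      have fL: "y \<le> t \<Longrightarrow> t \<le> w \<Longrightarrow> f t \<le> L t" for t
      proof -
        assume t: "y \<le> t" "t \<le> w"
        show "f t \<le> L t"
        proof (cases "t = y \<or> t = w")
          case True then show ?thesis using fpsi Ly Lw by auto
        next
          case False
          hence t': "y < t" "t < w" using t by auto
          have "f t * (w - y) \<le> f y * (w - t) + f w * (t - y)"
            using convex_tp[OF assms(1)] t' by (auto simp: tp_def)
          also have "\<dots> \<le> psi y * (w - t) + psi w * (t - y)"
            using t' fpsi by (intro add_mono mult_right_mono) auto
          also have "\<dots> = L t * (w - y)" by (simp add: Lmul)
          finally show ?thesis using yzw by (simp add: mult_le_cancel_right_pos)
        qed
      qed
      have Ph: "P t \<le> h t" for t
        using kh[of t] fL[of t] by (auto simp: P_def c_def h_def)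
      have "P z \<le> k z" by (rule kmax[OF Pc Ph])
      moreover have "k z < P z" using Lz yzw by (auto simp: P_def c_def psi_def)
      ultimately show False by simp
    qed
    hence "convex_on UNIV psi" by (rule tp_convex)
    moreover have "{(x, t::real). ereal (g x) - H x \<le> ereal t} = epigraph UNIV psi"
      by (auto simp: epigraph_def Hk psi_def)
    ultimately show ?thesis unfolding hh H_def[symmetric] econvex_def by (simp add: convex_epigraph)
  qed
qed

end
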